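(* Consider two linear classifiers $h_1(x)=\mathbf 1(w_1^\top x\ge0)$ and $h_2(x)=\mathbf 1(w_2^\top x\ge0)$ on $\mathbb R^2$ with $\|w_i\|_2=1$, and let $0<\theta<\pi$ satisfy $\cos\theta=-w_1^\top w_2$. If $\pi/2\le\theta<\pi$, then for every agent $x^{(0)}\in\mathbb R^2$ there exists an optimal sequential strategy $(x^{(1)},x^{(2)})$ with $x^{(1)}=x^{(2)}$; i.e. $c^*_{\mathrm{seq}}(x^{(0)},\{h_1,h_2\})=c^*_{\mathrm{conj}}(x^{(0)},\{h_1,h_2\})$.
   Context: With Euclidean cost, $c^*_{\mathrm{seq}}(x^{(0)},\{h_1,h_2\})=\min\{\|x^{(1)}-x^{(0)}\|_2+\|x^{(2)}-x^{(1)}\|_2:h_1(x^{(1)})=1,h_2(x^{(2)})=1\}$, an optimal sequential strategy is a minimizing pair, and $c^*_{\mathrm{conj}}(x^{(0)},\{h_1,h_2\})=\min\{\|z-x^{(0)}\|_2:h_1(z)=h_2(z)=1\}$. *)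

theory Defs
  imports "HOL-Analysis.Analysis"
begin

definition lin_clf :: "real^2 \<Rightarrow> real^2 \<Rightarrow> real" where
  "lin_clf w x = (if w \<bullet> x \<ge> 0 then 1 else 0)"

definition seq_feasible :: "(real^2 \<Rightarrow> real) \<Rightarrow> (real^2 \<Rightarrow> real) \<Rightarrow> real^2 \<Rightarrow> real^2 \<Rightarrow> bool" where
  "seq_feasible h1 h2 x1 x2 \<longleftrightarrow> h1 x1 = 1 \<and> h2 x2 = 1"

definition opt_seq_strategy ::
  "real^2 \<Rightarrow> (real^2 \<Rightarrow> real) \<Rightarrow> (real^2 \<Rightarrow> real) \<Rightarrow> real^2 \<Rightarrow> real^2 \<Rightarrow> bool" where
  "opt_seq_strategy x0 h1 h2 x1 x2 \<longleftrightarrow>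
     seq_feasible h1 h2 x1 x2 \<and>
     (\<forall>y1 y2. seq_feasible h1 h2 y1 y2 \<longrightarrow>
        norm (x1 - x0) + norm (x2 - x1) \<le> norm (y1 - x0) + norm (y2 - y1))"

definition c_seq :: "real^2 \<Rightarrow> (real^2 \<Rightarrow> real) \<Rightarrow> (real^2 \<Rightarrow> real) \<Rightarrow> real" where
  "c_seq x0 h1 h2 = Inf {norm (x1 - x0) + norm (x2 - x1) | x1 x2. h1 x1 = 1 \<and> h2 x2 = 1}"

definition c_conj :: "real^2 \<Rightarrow> (real^2 \<Rightarrow> real) \<Rightarrow> (real^2 \<Rightarrow> real) \<Rightarrow> real" where
  "c_conj x0 h1 h2 = Inf {norm (z - x0) | z. h1 z = 1 \<and> h2 z = 1}"

end

theory Submission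
  imports Defs
begin

lemma lin_clf_1: "lin_clf w x = 1 \<longleftrightarrow> w \<bullet> x \<ge> 0"
  by (simp add: lin_clf_def)

lemma proj_bound:
  fixes w2 y1 y2 :: "real^2"
  assumes "norm w2 = 1" "w2 \<bullet> y2 \<ge> 0" "w2 \<bullet> y1 < 0"
  shows "norm ((y1 - (w2 \<bullet> y1) *\<^sub>R w2) - y1) \<le> norm (y2 - y1)"
proof -
  have "norm ((y1 - (w2 \<bullet> y1) *\<^sub>R w2) - y1) = - (w2 \<bullet> y1)"
    using assms by simp
  also have "\<dots> \<le> w2 \<bullet> (y2 - y1)" using assms by (simp add: inner_diff_right)
  also have "\<dots> \<le> norm w2 * norm (y2 - y1)" by (rule norm_cauchy_schwarz)
  finally show ?thesis using assms by simp
qed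

theorem mainTheorem14:
  fixes w1 w2 :: "real^2" and \<theta> :: real
  assumes "norm w1 = 1" and "norm w2 = 1"
    and "0 < \<theta>" and "\<theta> < pi" and "cos \<theta> = - (w1 \<bullet> w2)"
    and "pi / 2 \<le> \<theta>"
  shows "\<forall>x0 :: real^2.
           (\<exists>x1 x2. opt_seq_strategy x0 (lin_clf w1) (lin_clf w2) x1 x2 \<and> x1 = x2) \<and>
           c_seq x0 (lin_clf w1) (lin_clf w2) = c_conj x0 (lin_clf w1) (lin_clf w2)"
proof
  fix x0 :: "real^2"
  have "0 \<le> cos (pi - \<theta>)" using assms by (intro cos_ge_zero) auto
  hence w12: "w1 \<bullet> w2 \<ge> 0" using assms by simp
  define K where "K = {x. w1 \<bullet> x \<ge> 0} \<inter> {x::real^2. w2 \<bullet> x \<ge> 0}"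
  have "closed K" unfolding K_def by (intro closed_Int closed_halfspace_ge)
  moreover have "0 \<in> K" unfolding K_def by simp
  ultimately obtain z where zK: "z \<in> K" and zmin: "\<And>y. y \<in> K \<Longrightarrow> dist x0 z \<le> dist x0 y"
    using distance_attains_inf by blast
  have key: "norm (z - x0) \<le> norm (y1 - x0) + norm (y2 - y1)"
    if "w1 \<bullet> y1 \<ge> 0" "w2 \<bullet> y2 \<ge> 0" for y1 y2
  proof (cases "w2 \<bullet> y1 \<ge> 0")
    case True
    then have "y1 \<in> K" using that unfolding K_def by simp
    then have "norm (z - x0) \<le> norm (y1 - x0)" using zmin[of y1] by (simp add: dist_norm norm_minus_commute)
    then show ?thesis using norm_ge_zero[of "y2 - y1"] by linarith
  next
    case False
    define p where "p = y1 - (w2 \<bullet> y1) *\<^sub>R w2"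
    have "w2 \<bullet> p = 0" using assms(2) unfolding p_def
      by (simp add: inner_diff_right dot_square_norm)
    moreover have "w1 \<bullet> p \<ge> 0" unfolding p_def using that False w12
      by (simp add: inner_diff_right) (smt (verit) mult_nonpos_nonneg)
    ultimately have "p \<in> K" unfolding K_def by simp
    then have "norm (z - x0) \<le> norm (p - x0)" using zmin[of p] by (simp add: dist_norm norm_minus_commute)
    also have "\<dots> \<le> norm (y1 - x0) + norm (p - y1)" using norm_triangle_ineq[of "y1 - x0" "p - y1"] by simp
    also have "norm (p - y1) \<le> norm (y2 - y1)" unfolding p_def
      using proj_bound[OF assms(2) that(2)] False by simp
    finally show ?thesis by simp
  qed
  have zz: "w1 \<bullet> z \<ge> 0" "w2 \<bullet> z \<ge> 0" using zK unfolding K_def by auto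
  have opt: "opt_seq_strategy x0 (lin_clf w1) (lin_clf w2) z z"
    unfolding opt_seq_strategy_def seq_feasible_def lin_clf_1 using zz key by simp
  have cs: "c_seq x0 (lin_clf w1) (lin_clf w2) = norm (z - x0)"
    unfolding c_seq_def lin_clf_1
  proof (rule cInf_eq_minimum)
    show "norm (z - x0) \<in> {norm (x1 - x0) + norm (x2 - x1) |x1 x2. 0 \<le> w1 \<bullet> x1 \<and> 0 \<le> w2 \<bullet> x2}"
      using zz by force
    show "\<And>x. x \<in> {norm (x1 - x0) + norm (x2 - x1) |x1 x2. 0 \<le> w1 \<bullet> x1 \<and> 0 \<le> w2 \<bullet> x2} \<Longrightarrow> norm (z - x0) \<le> x"
      using key by blast
  qed
  have cc: "c_conj x0 (lin_clf w1) (lin_clf w2) = norm (z - x0)"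
    unfolding c_conj_def lin_clf_1
  proof (rule cInf_eq_minimum)
    show "norm (z - x0) \<in> {norm (y - x0) |y. 0 \<le> w1 \<bullet> y \<and> 0 \<le> w2 \<bullet> y}"
      using zz by blast
    show "\<And>x. x \<in> {norm (y - x0) |y. 0 \<le> w1 \<bullet> y \<and> 0 \<le> w2 \<bullet> y} \<Longrightarrow> norm (z - x0) \<le> x"
      using zmin unfolding K_def by (auto simp: dist_norm norm_minus_commute)
  qed
  show "(\<exists>x1 x2. opt_seq_strategy x0 (lin_clf w1) (lin_clf w2) x1 x2 \<and> x1 = x2) \<and>
           c_seq x0 (lin_clf w1) (lin_clf w2) = c_conj x0 (lin_clf w1) (lin_clf w2)"
    using opt cs cc by metis
qed

end
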